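(* Let $a\ge 0$, $b$ integers and $0\le k\le a$. Let $a_1,a_2,b_1,b_2$ be integers with $0\le a_1,a_2$, $0\le b_1,b_2$, $a_1+a_2=a-k$, $b_1+b_2=b+2k$. Then $$\sum_{i=0}^{k}\binom{b_1}{i}\binom{b_2}{k-i}\,\Phi(i)=\binom{b+2k}{k}\phi_{2_1}(a_1,b_1)+\binom{b+2k-2}{k-1}\phi_{2_2}(a_1,b_1),$$ where, with $j=k-i$ and $M=4a+2b-4$, $$\Phi(i)=(2a_1+b_1)(2a_2+b_2)(a_1b_2+a_2b_1+2a_1a_2+b_2i+b_1j-2ij)\binom{M}{4a_1+2b_1-2}-(2a_1+b_1)^2(a_1b_2+a_2b_1+2a_1a_2+b_2i+b_1j-2ij)\binom{M}{4a_1+2b_1-1},$$ $$\phi_{2_1}(a_1,b_1)=(2a_1+b_1)(2a_2+b_2)(a_1b_2+a_2b_1+2a_1a_2)\binom{M}{4a_1+2b_1-2}-(2a_1+b_1)^2(a_1b_2+a_2b_1+2a_1a_2)\binom{M}{4a_1+2b_1-1},$$ $$\phi_{2_2}(a_1,b_1)=2(2a_1+b_1)(2a_2+b_2)b_1b_2\binom{M}{4a_1+2b_1-2}-2(2a_1+b_1)^2b_1b_2\binom{M}{4a_1+2b_1-1}.$$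
   Context: Binomial coefficients $\binom{N}{j}$ are $0$ for $j<0$ or $j>N$; $\binom{b+2k-2}{k-1}=0$ for $k=0$. ($\Phi(i)$ equals the $\mathbb{F}_0$ Kontsevich coefficient $\phi_0(a_1+i,a_1+b_1-i)$ computed for the splitting $(a_1+i,b_1-2i)+(a_2+j,b_2-2j)=(a,b)$.) *)

theory Defs
  imports Main
begin

definition ibinom :: "int \<Rightarrow> int \<Rightarrow> int" where
  "ibinom N j = (if 0 \<le> j \<and> j \<le> N then int (nat N choose nat j) else 0)"

definition PhiK :: "int \<Rightarrow> int \<Rightarrow> int \<Rightarrow> int \<Rightarrow> int \<Rightarrow> int \<Rightarrow> int \<Rightarrow> int \<Rightarrow> int" where
  "PhiK a b k a1 a2 b1 b2 i =
     (let j = k - i; M = 4*a + 2*b - 4;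
          L = a1*b2 + a2*b1 + 2*a1*a2 + b2*i + b1*j - 2*i*j in
      (2*a1 + b1) * (2*a2 + b2) * L * ibinom M (4*a1 + 2*b1 - 2)
      - (2*a1 + b1)^2 * L * ibinom M (4*a1 + 2*b1 - 1))"

definition phi21 :: "int \<Rightarrow> int \<Rightarrow> int \<Rightarrow> int \<Rightarrow> int \<Rightarrow> int \<Rightarrow> int" where
  "phi21 a b a1 a2 b1 b2 =
     (let M = 4*a + 2*b - 4; L = a1*b2 + a2*b1 + 2*a1*a2 in
      (2*a1 + b1) * (2*a2 + b2) * L * ibinom M (4*a1 + 2*b1 - 2)
      - (2*a1 + b1)^2 * L * ibinom M (4*a1 + 2*b1 - 1))"

definition phi22 :: "int \<Rightarrow> int \<Rightarrow> int \<Rightarrow> int \<Rightarrow> int \<Rightarrow> int \<Rightarrow> int" where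
  "phi22 a b a1 a2 b1 b2 =
     (let M = 4*a + 2*b - 4 in
      2 * (2*a1 + b1) * (2*a2 + b2) * b1 * b2 * ibinom M (4*a1 + 2*b1 - 2)
      - 2 * (2*a1 + b1)^2 * b1 * b2 * ibinom M (4*a1 + 2*b1 - 1))"

end

theory Submission imports Defs begin

lemma z0: "i * (0 choose i) = 0" by (cases i) auto

lemma lemA: "(\<Sum>i\<le>Suc K. i * (B1 choose i) * (m choose (Suc K - i))) = B1 * ((B1 - 1 + m) choose K)"
proof (cases B1)
  case 0
  then show ?thesis by (simp add: z0)
next
  case (Suc p)
  have "(\<Sum>i\<le>Suc K. i * (B1 choose i) * (m choose (Suc K - i)))
      = (\<Sum>i\<le>K. Suc i * (Suc p choose Suc i) * (m choose (K - i)))"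
    unfolding sum.atMost_Suc_shift using Suc by simp
  also have "\<dots> = (\<Sum>i\<le>K. Suc p * ((p choose i) * (m choose (K - i))))"
    by (rule sum.cong) (simp_all only: Suc_times_binomial mult.assoc)
  also have "\<dots> = Suc p * ((p + m) choose K)"
    by (simp only: sum_distrib_left[symmetric] vandermonde)
  finally show ?thesis using Suc by simp
qed

lemma lemA': "(\<Sum>i\<le>Suc K. (Suc K - i) * (m choose i) * (B2 choose (Suc K - i))) = B2 * ((m + (B2 - 1)) choose K)"
proof (cases B2)
  case 0
  have "\<And>i. (Suc K - i) * (m choose i) * (0 choose (Suc K - i)) = 0"
    by (metis z0 mult.commute mult.left_commute mult_0_right)
  then show ?thesis using 0 by simp
next
  case (Suc q)
  have "(\<Sum>i\<le>Suc K. (Suc K - i) * (m choose i) * (B2 choose (Suc K - i)))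
      = (\<Sum>i\<le>K. (Suc K - i) * (m choose i) * (B2 choose (Suc K - i)))"
    by simp
  also have "\<dots> = (\<Sum>i\<le>K. Suc q * ((m choose i) * (q choose (K - i))))"
  proof (rule sum.cong)
    fix i assume "i \<in> {..K}"
    then have "Suc K - i = Suc (K - i)" by auto
    then show "(Suc K - i) * (m choose i) * (B2 choose (Suc K - i)) = Suc q * ((m choose i) * (q choose (K - i)))"
      using Suc by (simp only: Suc_times_binomial mult.commute mult.left_commute)
  qed simp
  also have "\<dots> = Suc q * ((m + q) choose K)"
    by (simp only: sum_distrib_left[symmetric] vandermonde)
  finally show ?thesis using Suc by simp
qed

lemma lemB: "(\<Sum>i\<le>Suc (Suc K). i * (Suc (Suc K) - i) * (B1 choose i) * (B2 choose (Suc (Suc K) - i)))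
   = B1 * B2 * ((B1 - 1 + (B2 - 1)) choose K)"
proof (cases B1)
  case 0
  have "\<And>i. i * (Suc (Suc K) - i) * (0 choose i) * (B2 choose (Suc (Suc K) - i)) = 0"
    by (metis z0 mult.commute mult.left_commute mult_0_right)
  then show ?thesis using 0 by (simp only: sum.neutral_const mult_0)
next
  case (Suc p)
  have "(\<Sum>i\<le>Suc (Suc K). i * (Suc (Suc K) - i) * (B1 choose i) * (B2 choose (Suc (Suc K) - i)))
      = (\<Sum>i\<le>Suc K. Suc i * (Suc K - i) * (Suc p choose Suc i) * (B2 choose (Suc K - i)))"
    unfolding sum.atMost_Suc_shift[of _ "Suc K"] using Suc by simp
  also have "\<dots> = (\<Sum>i\<le>Suc K. Suc p * ((Suc K - i) * (p choose i) * (B2 choose (Suc K - i))))"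
  proof (rule sum.cong)
    fix i
    have "Suc i * (Suc p choose Suc i) = Suc p * (p choose i)" by (rule Suc_times_binomial)
    then show "Suc i * (Suc K - i) * (Suc p choose Suc i) * (B2 choose (Suc K - i)) =
         Suc p * ((Suc K - i) * (p choose i) * (B2 choose (Suc K - i)))"
      by (metis mult.commute mult.left_commute)
  qed simp
  also have "\<dots> = Suc p * (B2 * ((p + (B2 - 1)) choose K))"
    by (simp only: sum_distrib_left[symmetric] lemA')
  finally show ?thesis using Suc by (simp only: mult.assoc diff_Suc_1)
qed

lemma ibinom_nat: "ibinom (int n) (int m) = int (n choose m)"
  unfolding ibinom_def by auto

lemma key:
  fixes B1 B2 K :: nat and L0 :: int
  shows "(\<Sum>i\<le>K. int (B1 choose i) * int (B2 choose (K-i)) *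
     (L0 + int B2 * int i + int B1 * (int K - int i) - 2 * int i * (int K - int i)))
   = int ((B1+B2) choose K) * L0 + ibinom (int B1 + int B2 - 2) (int K - 1) * (2 * int B1 * int B2)"
proof -
  define V where "V = (\<Sum>i\<le>K. (B1 choose i) * (B2 choose (K-i)))"
  define SA where "SA = (\<Sum>i\<le>K. i * (B1 choose i) * (B2 choose (K-i)))"
  define SA' where "SA' = (\<Sum>i\<le>K. (K - i) * (B1 choose i) * (B2 choose (K-i)))"
  define SB where "SB = (\<Sum>i\<le>K. i * (K - i) * (B1 choose i) * (B2 choose (K-i)))"
  have "(\<Sum>i\<le>K. int (B1 choose i) * int (B2 choose (K-i)) *
     (L0 + int B2 * int i + int B1 * (int K - int i) - 2 * int i * (int K - int i)))
    = (\<Sum>i\<le>K. L0 * int ((B1 choose i) * (B2 choose (K-i))) + int B2 * int (i * (B1 choose i) * (B2 choose (K-i)))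
        + int B1 * int ((K - i) * (B1 choose i) * (B2 choose (K-i))) - 2 * int (i * (K - i) * (B1 choose i) * (B2 choose (K-i))))"
  proof (rule sum.cong)
    fix i assume "i \<in> {..K}"
    then have "int (K - i) = int K - int i" by auto
    then show "int (B1 choose i) * int (B2 choose (K-i)) *
     (L0 + int B2 * int i + int B1 * (int K - int i) - 2 * int i * (int K - int i)) =
      L0 * int ((B1 choose i) * (B2 choose (K-i))) + int B2 * int (i * (B1 choose i) * (B2 choose (K-i)))
        + int B1 * int ((K - i) * (B1 choose i) * (B2 choose (K-i))) - 2 * int (i * (K - i) * (B1 choose i) * (B2 choose (K-i)))"
      by (simp add: algebra_simps)
  qed simp
  also have "\<dots> = L0 * int V + int B2 * int SA + int B1 * int SA' - 2 * int SB"
    unfolding V_def SA_def SA'_def SB_def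
    by (simp add: sum.distrib sum_subtractf sum_distrib_left of_nat_sum)
  also have "\<dots> = int ((B1+B2) choose K) * L0 + ibinom (int B1 + int B2 - 2) (int K - 1) * (2 * int B1 * int B2)"
  proof -
    have V: "V = (B1+B2) choose K" unfolding V_def by (rule vandermonde)
    have "int B2 * int SA + int B1 * int SA' - 2 * int SB = ibinom (int B1 + int B2 - 2) (int K - 1) * (2 * int B1 * int B2)"
    proof (cases K)
      case 0
      then show ?thesis unfolding SA_def SA'_def SB_def ibinom_def by simp
    next
      case (Suc K1)
      note K1 = Suc
      have A: "SA = B1 * ((B1 - 1 + B2) choose K1)" unfolding SA_def K1 by (rule lemA)
      have A': "SA' = B2 * ((B1 + (B2 - 1)) choose K1)" unfolding SA'_def K1 by (rule lemA')
      show ?thesis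
      proof (cases K1)
        case 0
        have B: "SB = 0" unfolding SB_def K1 0 by simp
        show ?thesis
        proof (cases "B1 = 0 \<or> B2 = 0")
          case True then show ?thesis using A A' B by auto
        next
          case False
          then show ?thesis using A A' B K1 0 unfolding ibinom_def by auto
        qed
      next
        case (Suc K2)
        have B: "SB = B1 * B2 * ((B1 - 1 + (B2 - 1)) choose K2)" unfolding SB_def K1 Suc by (rule lemB)
        show ?thesis
        proof (cases "B1 = 0 \<or> B2 = 0")
          case True then show ?thesis using A A' B by auto
        next
          case False
          then obtain p q where p: "B1 = Suc p" and q: "B2 = Suc q" by (metis not0_implies_Suc)
          have e1: "B1 - 1 + B2 = Suc (p + q)" "B1 + (B2 - 1) = Suc (p + q)" "B1 - 1 + (B2 - 1) = p + q"
            using p q by auto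
          have pas: "(Suc (p+q) choose Suc K2) = (p + q choose K2) + (p + q choose Suc K2)" by simp
          have ib: "ibinom (int B1 + int B2 - 2) (int K - 1) = int (p + q choose Suc K2)"
          proof -
            have "int B1 + int B2 - 2 = int (p+q)" "int K - 1 = int (Suc K2)"
              using p q K1 Suc by simp_all
            then show ?thesis by (simp only: ibinom_nat)
          qed
          have ib2: "ibinom (int p + int q) (1 + int K2) = int (p + q choose Suc K2)"
            using ibinom_nat[of "p+q" "Suc K2"] by (simp add: add.commute)
          show ?thesis unfolding ib A A' B e1 K1 Suc pas
            by (simp add: algebra_simps p q ib2)
        qed
      qed
    qed
    then show ?thesis using V by (simp add: algebra_simps)
  qed
  finally show ?thesis .
qed

lemma sum_int_nat: "(\<Sum>i = 0..int K. f i) = (\<Sum>i\<le>K. f (int i))"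
proof (induct K)
  case 0 then show ?case by simp
next
  case (Suc K)
  have "{0..int (Suc K)} = insert (int K + 1) {0..int K}" by auto
  then show ?case using Suc by (simp add: add.commute)
qed

lemma fac: "P * L * X - Q * L * Y = L * (P * X - Q * (Y::int))" by (simp add: algebra_simps)
lemma fac2: "2 * P1 * P2 * u * v * X - 2 * Q * u * v * Y = 2 * u * v * (P1 * P2 * X - Q * (Y::int))" by (simp add: algebra_simps)

theorem mainTheorem8:
  fixes a b k a1 a2 b1 b2 :: int
  assumes "0 \<le> a" and "0 \<le> k" and "k \<le> a"
    and "0 \<le> a1" and "0 \<le> a2" and "0 \<le> b1" and "0 \<le> b2"
    and "a1 + a2 = a - k" and "b1 + b2 = b + 2*k"
  shows "(\<Sum>i = 0..k. ibinom b1 i * ibinom b2 (k - i) * PhiK a b k a1 a2 b1 b2 i)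
         = ibinom (b + 2*k) k * phi21 a b a1 a2 b1 b2
           + ibinom (b + 2*k - 2) (k - 1) * phi22 a b a1 a2 b1 b2"
proof -
  obtain K where K: "k = int K" using assms(2) by (metis nonneg_eq_int)
  obtain B1 where B1: "b1 = int B1" using assms(6) by (metis nonneg_eq_int)
  obtain B2 where B2: "b2 = int B2" using assms(7) by (metis nonneg_eq_int)
  define C where "C = (2*a1 + b1) * (2*a2 + b2) * ibinom (4*a + 2*b - 4) (4*a1 + 2*b1 - 2)
      - (2*a1 + b1)^2 * ibinom (4*a + 2*b - 4) (4*a1 + 2*b1 - 1)"
  define L0 where "L0 = a1*b2 + a2*b1 + 2*a1*a2"
  have ph: "PhiK a b k a1 a2 b1 b2 i = (L0 + b2 * i + b1 * (k - i) - 2 * i * (k - i)) * C" for i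
    unfolding PhiK_def C_def L0_def Let_def by (rule fac)
  have p21: "phi21 a b a1 a2 b1 b2 = L0 * C"
    unfolding phi21_def C_def L0_def Let_def by (rule fac)
  have p22: "phi22 a b a1 a2 b1 b2 = 2 * b1 * b2 * C"
    unfolding phi22_def C_def Let_def by (rule fac2)
  have bb: "b + 2*k = int B1 + int B2" using assms(9) B1 B2 by simp
  have "(\<Sum>i = 0..k. ibinom b1 i * ibinom b2 (k - i) * PhiK a b k a1 a2 b1 b2 i)
     = (\<Sum>i\<le>K. int (B1 choose i) * int (B2 choose (K-i)) *
     (L0 + int B2 * int i + int B1 * (int K - int i) - 2 * int i * (int K - int i))) * C"
    unfolding K sum_int_nat sum_distrib_right
  proof (rule sum.cong)
    fix i assume "i \<in> {..K}"
    then have d: "int K - int i = int (K - i)" by auto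
    have e1: "ibinom b1 (int i) = int (B1 choose i)" unfolding B1 by (rule ibinom_nat)
    have e2: "ibinom b2 (int K - int i) = int (B2 choose (K - i))" unfolding B2 d by (rule ibinom_nat)
    have e3: "PhiK a b (int K) a1 a2 b1 b2 (int i) = (L0 + int B2 * int i + int B1 * (int K - int i) - 2 * int i * (int K - int i)) * C"
      using ph[of "int i"] unfolding K B1 B2 .
    show "ibinom b1 (int i) * ibinom b2 (int K - int i) * PhiK a b (int K) a1 a2 b1 b2 (int i) =
         int (B1 choose i) * int (B2 choose (K - i)) *
         (L0 + int B2 * int i + int B1 * (int K - int i) - 2 * int i * (int K - int i)) * C"
      unfolding e1 e2 e3 by (simp only: mult.assoc)
  qed simp
  also have "\<dots> = (int ((B1+B2) choose K) * L0 + ibinom (int B1 + int B2 - 2) (int K - 1) * (2 * int B1 * int B2)) * C"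
    by (simp only: key)
  also have "\<dots> = ibinom (b + 2*k) k * phi21 a b a1 a2 b1 b2
           + ibinom (b + 2*k - 2) (k - 1) * phi22 a b a1 a2 b1 b2"
  proof -
    have bb': "b + 2*k = int (B1+B2)" using bb by simp
    have h1: "ibinom (b + 2*k) k = int ((B1+B2) choose K)"
      by (subst bb', subst K, rule ibinom_nat)
    have h2: "ibinom (b + 2*k - 2) (k - 1) = ibinom (int B1 + int B2 - 2) (int K - 1)"
      by (subst bb, subst K, rule refl)
    show ?thesis unfolding p21 p22 h1 h2 unfolding B1 B2 by (simp add: algebra_simps)
  qed
  finally show ?thesis .
qed

end
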